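(* Let $\Omega\subset\mathbb{R}^n$ be a bounded domain, let $B_r=B_r(x_0)\Subset\Omega$ with $|B_r|\le1$, let $\gamma\in(0,1)$, $K\ge1$ and $t_K:=K|B_r|^{\frac{\gamma-1}{n}}$. Let $\phi:\Omega\times[0,\infty)\to[0,\infty)$ be convex in $t$ with $\phi(x,t)=\int_0^t\phi'(x,s)\,ds$, where $\phi'$ satisfies (A0), (Inc)$_{p-1}$ and (Dec)$_{q_1-1}$ with constant $L$ and $1<p\le q_1$. Define $\bar\phi(t):=\int_0^t\bar\phi'(s)\,ds$ with \[ \bar\phi'(t):=\begin{cases}\phi'(x_0,t)&\text{if }0\le t\le t_K,\\ \frac{\phi'(x_0,t_K)}{t_K^{p-1}}t^{p-1}&\text{if }t_K\le t.\end{cases} \] Suppose that $\phi^+_{B_r}(t)\le L_K\phi^-_{B_r}(t)$ for some $L_K\ge0$ and all $t\in[1,t_K]$. Then: \begin{enumerate} \item $\bar\phi\in C^1([0,\infty))$ and $\bar\phi'$ satisfies (Inc)$_{p-1}$ and (Dec)$_{q_1-1}$; \item $\bar\phi(t)=\phi(x_0,t)$ for all $t\le t_K$; \item $\bar\phi(t)\le\frac{q_1}{p}L_K\phi(x,t)+L$ for all $(x,t)\in B_r\times[0,\infty)$, and $W^{1,\phi}(B_r)\subset W^{1,\bar\phi}(B_r)$. \end{enumerate}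
   Context: For $g:(0,\infty)\to[0,\infty)$ and $\gamma\in\mathbb{R}$: (Inc)$_\gamma$ (resp. (Dec)$_\gamma$) means $t\mapsto g(t)/t^\gamma$ is increasing (resp. decreasing) on $(0,\infty)$; (A0) with constant $L\ge1$ means $L^{-1}\le g(1)\le L$; conditions on $\phi'(x,\cdot)$ are required for every $x\in\Omega$. $\phi^+_{B_r}(t)=\sup_{x\in B_r}\phi(x,t)$, $\phi^-_{B_r}(t)=\inf_{x\in B_r}\phi(x,t)$. $W^{1,\phi}(B_r)$ is the set of $f\in W^{1,1}(B_r)$ with $f,|Df|$ in the generalized Orlicz space $L^\phi(B_r)$, whose norm is $\inf\{\lambda>0:\int_{B_r}\phi(x,|f|/\lambda)\,dx\le1\}$; $W^{1,\bar\phi}(B_r)$ is defined analogously. *)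

theory Defs
  imports "HOL-Analysis.Analysis"
begin

definition Inc :: "real \<Rightarrow> (real \<Rightarrow> real) \<Rightarrow> bool" where
  "Inc \<gamma> g \<longleftrightarrow> (\<forall>s t. 0 < s \<longrightarrow> s \<le> t \<longrightarrow> g s / s powr \<gamma> \<le> g t / t powr \<gamma>)"

definition Dec :: "real \<Rightarrow> (real \<Rightarrow> real) \<Rightarrow> bool" where
  "Dec \<gamma> g \<longleftrightarrow> (\<forall>s t. 0 < s \<longrightarrow> s \<le> t \<longrightarrow> g t / t powr \<gamma> \<le> g s / s powr \<gamma>)"

definition A0 :: "real \<Rightarrow> (real \<Rightarrow> real) \<Rightarrow> bool" where
  "A0 L g \<longleftrightarrow> inverse L \<le> g 1 \<and> g 1 \<le> L"

definition phi_plus :: "('a \<Rightarrow> real \<Rightarrow> real) \<Rightarrow> 'a set \<Rightarrow> real \<Rightarrow> real" where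
  "phi_plus \<phi> B t = (SUP x\<in>B. \<phi> x t)"

definition phi_minus :: "('a \<Rightarrow> real \<Rightarrow> real) \<Rightarrow> 'a set \<Rightarrow> real \<Rightarrow> real" where
  "phi_minus \<phi> B t = (INF x\<in>B. \<phi> x t)"

fun Ck :: "nat \<Rightarrow> 'a::euclidean_space set \<Rightarrow> ('a \<Rightarrow> real) set" where
  "Ck 0 S = {f. continuous_on S f}"
| "Ck (Suc k) S = {f. f differentiable_on S \<and>
      (\<forall>v. (\<lambda>x. frechet_derivative f (at x) v) \<in> Ck k S)}"

definition test_functions :: "'a::euclidean_space set \<Rightarrow> ('a \<Rightarrow> real) set" where
  "test_functions B = {\<psi>. (\<forall>k. \<psi> \<in> Ck k UNIV) \<and>
      compact (closure {x. \<psi> x \<noteq> 0}) \<and> closure {x. \<psi> x \<noteq> 0} \<subseteq> B}"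

definition weak_gradient :: "('a::euclidean_space \<Rightarrow> real) \<Rightarrow> ('a \<Rightarrow> 'a) \<Rightarrow> 'a set \<Rightarrow> bool" where
  "weak_gradient f G B \<longleftrightarrow>
     integrable (lebesgue_on B) f \<and> integrable (lebesgue_on B) G \<and>
     (\<forall>\<psi>\<in>test_functions B. \<forall>i\<in>Basis.
        (LINT x|lebesgue_on B. f x * frechet_derivative \<psi> (at x) i)
          = - (LINT x|lebesgue_on B. (G x \<bullet> i) * \<psi> x))"

text \<open>Generalized Orlicz space L^Phi(B): measurable f with finite Luxemburg norm.\<close>
definition orlicz :: "('a::euclidean_space \<Rightarrow> real \<Rightarrow> real) \<Rightarrow> 'a set \<Rightarrow> ('a \<Rightarrow> real) set" where
  "orlicz \<Phi> B = {f. f \<in> borel_measurable (lebesgue_on B) \<and>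
      (\<exists>c>0. (\<integral>\<^sup>+ x. ennreal (\<Phi> x (\<bar>f x\<bar> / c)) \<partial>(lebesgue_on B)) \<le> 1)}"

definition sobolev_orlicz :: "('a::euclidean_space \<Rightarrow> real \<Rightarrow> real) \<Rightarrow> 'a set \<Rightarrow> ('a \<Rightarrow> real) set" where
  "sobolev_orlicz \<Phi> B = {f. \<exists>G. weak_gradient f G B \<and> f \<in> orlicz \<Phi> B \<and>
       (\<lambda>x. norm (G x)) \<in> orlicz \<Phi> B}"

end

theory Submission
  imports Defs
begin


definition Gz :: "(real \<Rightarrow> real) \<Rightarrow> real \<Rightarrow> real" where
  "Gz g s = (if s \<le> 0 then 0 else g s)"

locale gprops =
  fixes g :: "real \<Rightarrow> real" and L p q1 :: real
  assumes L: "L \<ge> 1" and pq: "1 < p" "p \<le> q1"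
    and nn: "\<And>t. 0 < t \<Longrightarrow> g t \<ge> 0"
    and a0: "A0 L g" and inc: "Inc (p - 1) g" and dec: "Dec (q1 - 1) g"
begin

lemma up: "0 < s \<Longrightarrow> s \<le> t \<Longrightarrow> g s \<le> g t / t powr (p-1) * s powr (p-1)"
proof -
  assume a: "0 < s" "s \<le> t"
  have "g s / s powr (p-1) \<le> g t / t powr (p-1)" using inc a unfolding Inc_def by blast
  moreover have "s powr (p-1) > 0" using a by simp
  ultimately show ?thesis by (simp add: divide_le_eq mult.commute)
qed

lemma lowq: "0 < s \<Longrightarrow> s \<le> t \<Longrightarrow> g t / t powr (q1-1) * s powr (q1-1) \<le> g s"
proof -
  assume a: "0 < s" "s \<le> t"
  have "g t / t powr (q1-1) \<le> g s / s powr (q1-1)" using dec a unfolding Dec_def by blast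
  moreover have "s powr (q1-1) > 0" using a by simp
  ultimately show ?thesis by (simp add: le_divide_eq mult.commute)
qed

lemma lowp: "0 < s \<Longrightarrow> s \<le> t \<Longrightarrow> g s / s powr (p-1) * t powr (p-1) \<le> g t"
proof -
  assume a: "0 < s" "s \<le> t"
  have "g s / s powr (p-1) \<le> g t / t powr (p-1)" using inc a unfolding Inc_def by blast
  moreover have "t powr (p-1) > 0" using a by simp
  ultimately show ?thesis by (simp add: le_divide_eq mult.commute)
qed

lemma upq: "0 < s \<Longrightarrow> s \<le> t \<Longrightarrow> g t \<le> g s / s powr (q1-1) * t powr (q1-1)"
proof -
  assume a: "0 < s" "s \<le> t"
  have "g t / t powr (q1-1) \<le> g s / s powr (q1-1)" using dec a unfolding Dec_def by blast
  moreover have "t powr (q1-1) > 0" using a by simp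
  ultimately show ?thesis by (simp add: divide_le_eq mult.commute)
qed

lemma mono_g: "0 < s \<Longrightarrow> s \<le> t \<Longrightarrow> g s \<le> g t"
proof -
  assume a: "0 < s" "s \<le> t"
  have "g s \<le> g t / t powr (p-1) * s powr (p-1)" using up a .
  also have "\<dots> = g t * (s powr (p-1) / t powr (p-1))" by simp
  also have "\<dots> \<le> g t * 1"
    using a pq nn[of t] by (intro mult_left_mono) (auto intro!: powr_mono2)
  finally show ?thesis by simp
qed

lemma g1: "g 1 \<le> L" "inverse L \<le> g 1" using a0 unfolding A0_def by auto

lemma small: "0 < s \<Longrightarrow> s \<le> 1 \<Longrightarrow> g s \<le> L * s powr (p-1)"
proof -
  assume a: "0 < s" "s \<le> 1"
  have "g s \<le> g 1 * s powr (p-1)" using up[of s 1] a by simp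
  also have "\<dots> \<le> L * s powr (p-1)" using g1 by (intro mult_right_mono) auto
  finally show ?thesis .
qed

lemma small1: "0 < s \<Longrightarrow> s \<le> 1 \<Longrightarrow> g s \<le> L"
  using mono_g[of s 1] g1 by auto

lemma big: "1 \<le> t \<Longrightarrow> g t \<le> L * t powr (q1-1)"
proof -
  assume a: "1 \<le> t"
  have "g t \<le> g 1 * t powr (q1-1)" using upq[of 1 t] a by simp
  also have "\<dots> \<le> L * t powr (q1-1)" using g1 by (intro mult_right_mono) auto
  finally show ?thesis .
qed

lemma Gz_mono: "mono (Gz g)"
  unfolding mono_def Gz_def using mono_g nn by auto

lemma Gz_int: "Gz g integrable_on {a..b}"
  using Gz_mono by (intro integrable_on_mono_on) (auto simp: mono_on_def mono_def)

lemma Gz_nn: "Gz g s \<ge> 0" unfolding Gz_def using nn by auto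

end


lemma powr_int_ab:
  fixes a b p :: real
  assumes "0 < a" "a \<le> b" "0 < p"
  shows "((\<lambda>s. s powr (p-1)) has_integral (b powr p / p - a powr p / p)) {a..b}"
proof -
  have "((\<lambda>s. s powr p / p) has_vector_derivative (\<lambda>s. s powr (p-1)) x) (at x within {a..b})"
    if "x \<in> {a..b}" for x
  proof -
    have "x > 0" using that assms by auto
    then have "((\<lambda>s. s powr p) has_real_derivative p * x powr (p-1)) (at x)"
      by (rule has_real_derivative_powr)
    then have "((\<lambda>s. s powr p / p) has_real_derivative p * x powr (p-1) / p) (at x)"
      by (rule DERIV_cdivide)
    then have "((\<lambda>s. s powr p / p) has_real_derivative x powr (p-1)) (at x)"
      using assms by simp
    then show ?thesis
      by (simp add: has_real_derivative_iff_has_vector_derivative has_vector_derivative_at_within)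
  qed
  from fundamental_theorem_of_calculus[OF assms(2) this] show ?thesis by simp
qed

context gprops begin

lemma I1: assumes "a > 0" shows "integral {0..a} (Gz g) \<le> g a * a / p"
proof -
  have h: "((\<lambda>s. g a / a powr (p-1) * s powr (p-1)) has_integral
            (g a / a powr (p-1) * (a powr (p-1+1) / (p-1+1)))) {0..a}"
    using pq assms by (intro has_integral_mult_right has_integral_powr_from_0) auto
  have e: "g a / a powr (p-1) * (a powr (p-1+1) / (p-1+1)) = g a * a / p"
    using assms by (simp add: powr_diff field_simps)
  have "integral {0..a} (Gz g) \<le> integral {0..a} (\<lambda>s. g a / a powr (p-1) * s powr (p-1))"
  proof (rule integral_le)
    show "Gz g integrable_on {0..a}" by (rule Gz_int)
    show "(\<lambda>s. g a / a powr (p-1) * s powr (p-1)) integrable_on {0..a}" using h by blast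
    fix x assume "x \<in> {0..a}"
    then show "Gz g x \<le> g a / a powr (p-1) * x powr (p-1)"
      using up[of x a] by (auto simp: Gz_def)
  qed
  also have "\<dots> = g a * a / p" unfolding integral_unique[OF h] by (rule e)
  finally show ?thesis .
qed

lemma I2: assumes "a > 0" shows "g a * a / q1 \<le> integral {0..a} (Gz g)"
proof -
  have h: "((\<lambda>s. g a / a powr (q1-1) * s powr (q1-1)) has_integral
            (g a / a powr (q1-1) * (a powr (q1-1+1) / (q1-1+1)))) {0..a}"
    using pq assms by (intro has_integral_mult_right has_integral_powr_from_0) auto
  have e: "g a / a powr (q1-1) * (a powr (q1-1+1) / (q1-1+1)) = g a * a / q1"
    using assms by (simp add: powr_diff field_simps)
  have "g a * a / q1 = integral {0..a} (\<lambda>s. g a / a powr (q1-1) * s powr (q1-1))"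
    unfolding integral_unique[OF h] by (rule e[symmetric])
  also have "\<dots> \<le> integral {0..a} (Gz g)"
  proof (rule integral_le)
    show "Gz g integrable_on {0..a}" by (rule Gz_int)
    show "(\<lambda>s. g a / a powr (q1-1) * s powr (q1-1)) integrable_on {0..a}" using h by blast
    fix x assume "x \<in> {0..a}"
    then show "g a / a powr (q1-1) * x powr (q1-1) \<le> Gz g x"
      using lowq[of x a] pq by (auto simp: Gz_def)
  qed
  finally show ?thesis .
qed

lemma I3: assumes "0 < a" "a \<le> b"
  shows "g a / a powr (p-1) * (b powr p / p - a powr p / p) \<le> integral {a..b} (Gz g)"
proof -
  have h: "((\<lambda>s. g a / a powr (p-1) * s powr (p-1)) has_integral
            (g a / a powr (p-1) * (b powr p / p - a powr p / p))) {a..b}"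
    using pq assms by (intro has_integral_mult_right powr_int_ab) auto
  have "g a / a powr (p-1) * (b powr p / p - a powr p / p)
        = integral {a..b} (\<lambda>s. g a / a powr (p-1) * s powr (p-1))"
    by (rule integral_unique[OF h, symmetric])
  also have "\<dots> \<le> integral {a..b} (Gz g)"
  proof (rule integral_le)
    show "Gz g integrable_on {a..b}" by (rule Gz_int)
    show "(\<lambda>s. g a / a powr (p-1) * s powr (p-1)) integrable_on {a..b}" using h by blast
    fix x assume "x \<in> {a..b}"
    then show "g a / a powr (p-1) * x powr (p-1) \<le> Gz g x"
      using lowp[of a x] assms by (auto simp: Gz_def)
  qed
  finally show ?thesis .
qed

lemma I4: assumes "0 \<le> t" "t \<le> 1" shows "integral {0..t} (Gz g) \<le> L * t"
proof -
  have "integral {0..t} (Gz g) \<le> integral {0..t} (\<lambda>_. L)"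
  proof (rule integral_le)
    show "Gz g integrable_on {0..t}" by (rule Gz_int)
    fix x assume "x \<in> {0..t}"
    then show "Gz g x \<le> L" using small1[of x] assms L by (auto simp: Gz_def)
  qed auto
  then show ?thesis using assms by (simp add: mult.commute)
qed

lemma I5: "0 \<le> integral {0..t} (Gz g)"
  by (rule integral_nonneg) (auto intro: Gz_int Gz_nn)

lemma I6: assumes "1 \<le> t" shows "integral {0..t} (Gz g) \<le> L * t powr (q1-1) * t"
proof -
  have "integral {0..t} (Gz g) \<le> integral {0..t} (\<lambda>_. L * t powr (q1-1))"
  proof (rule integral_le)
    show "Gz g integrable_on {0..t}" by (rule Gz_int)
    fix x assume "x \<in> {0..t}"
    then show "Gz g x \<le> L * t powr (q1-1)" using mono_g[of x t] big[of t] assms L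
      by (auto simp: Gz_def)
  qed auto
  then show ?thesis using assms by (simp add: mult_ac)
qed

end


context gprops begin

lemma Gz_tendsto: "(Gz g \<longlongrightarrow> Gz g s0) (at s0)"
proof (cases "s0 < 0")
  case True
  have ev: "eventually (\<lambda>s. s < 0) (at s0)"
    using order_tendstoD(2)[OF tendsto_ident_at True] .
  have "eventually (\<lambda>s. Gz g s = 0) (at s0)"
    using ev by eventually_elim (auto simp: Gz_def)
  then have "(Gz g \<longlongrightarrow> 0) (at s0)" by (rule tendsto_eventually)
  then show ?thesis using True by (simp add: Gz_def)
next
  case False
  show ?thesis
  proof (cases "s0 = 0")
    case True
    have ev: "eventually (\<lambda>s. s \<in> {-1<..<1}) (at s0)"
    proof -
      have "eventually (\<lambda>s. -1 < s) (at s0)" using order_tendstoD(1)[OF tendsto_ident_at, of "-1" s0 UNIV] True by simp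
      moreover have "eventually (\<lambda>s. s < 1) (at s0)" using order_tendstoD(2)[OF tendsto_ident_at, of s0 1 UNIV] True by simp
      ultimately show ?thesis by eventually_elim auto
    qed
    have up: "eventually (\<lambda>s. Gz g s \<le> L * \<bar>s\<bar> powr (p-1)) (at s0)"
      using ev
    proof eventually_elim
      case (elim s) then show ?case using small[of s] L by (auto simp: Gz_def)
    qed
    have lo: "eventually (\<lambda>s. 0 \<le> Gz g s) (at s0)" using Gz_nn by auto
    have "((\<lambda>s. \<bar>s\<bar> powr (p-1)) \<longlongrightarrow> 0) (at s0)"
      using True pq by (intro tendsto_zero_powrI) (auto intro!: tendsto_eq_intros)
    then have "((\<lambda>s. L * \<bar>s\<bar> powr (p-1)) \<longlongrightarrow> 0) (at s0)"
      using tendsto_mult_right_zero by blast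
    then have "(Gz g \<longlongrightarrow> 0) (at s0)"
      using tendsto_sandwich[OF lo up] by auto
    then show ?thesis using True by (simp add: Gz_def)
  next
    case False2: False
    then have s0: "s0 > 0" using False by auto
    define lo where "lo s = min (g s0 / s0 powr (p-1) * s powr (p-1)) (g s0 / s0 powr (q1-1) * s powr (q1-1))" for s
    define hi where "hi s = max (g s0 / s0 powr (p-1) * s powr (p-1)) (g s0 / s0 powr (q1-1) * s powr (q1-1))" for s
    have ev: "eventually (\<lambda>s. s > 0) (at s0)"
      using order_tendstoD(1)[OF tendsto_ident_at s0] .
    have b: "eventually (\<lambda>s. lo s \<le> Gz g s \<and> Gz g s \<le> hi s) (at s0)"
      using ev
    proof eventually_elim
      case (elim s)
      show ?case
      proof (cases "s \<le> s0")
        case True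
        then show ?thesis using lowq[of s s0] up[of s s0] elim
          unfolding lo_def hi_def Gz_def by auto
      next
        case False
        then show ?thesis using lowp[of s0 s] upq[of s0 s] elim s0
          unfolding lo_def hi_def Gz_def by auto
      qed
    qed
    have l1: "((\<lambda>s. g s0 / s0 powr r * s powr r) \<longlongrightarrow> g s0) (at s0)" for r
    proof -
      have "((\<lambda>s. g s0 / s0 powr r * s powr r) \<longlongrightarrow> g s0 / s0 powr r * s0 powr r) (at s0)"
        using s0 by (intro tendsto_intros) auto
      then show ?thesis using s0 by simp
    qed
    have "(lo \<longlongrightarrow> min (g s0) (g s0)) (at s0)" unfolding lo_def
      by (intro tendsto_min l1)
    then have tl: "(lo \<longlongrightarrow> g s0) (at s0)" by simp
    have "(hi \<longlongrightarrow> max (g s0) (g s0)) (at s0)" unfolding hi_def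
      by (intro tendsto_max l1)
    then have th: "(hi \<longlongrightarrow> g s0) (at s0)" by simp
    have "(Gz g \<longlongrightarrow> g s0) (at s0)"
      using b by (intro tendsto_sandwich[OF _ _ tl th]) (auto elim: eventually_mono)
    then show ?thesis using s0 by (simp add: Gz_def)
  qed
qed

lemma Gz_cont: "continuous_on UNIV (Gz g)"
  using Gz_tendsto by (simp add: continuous_on_def continuous_within)

end

lemma nn_integral_cmult_le:
  fixes k :: ennreal
  assumes "k < top"
  shows "(\<integral>\<^sup>+ x. k * f x \<partial>M) \<le> k * integral\<^sup>N M f"
proof (cases "k = 0")
  case True then show ?thesis by simp
next
  case False
  show ?thesis
    unfolding nn_integral_def[of M "\<lambda>x. k * f x"]
  proof (rule SUP_least)
    fix h assume "h \<in> {h. simple_function M h \<and> h \<le> (\<lambda>x. k * f x)}"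
    then have h: "simple_function M h" "\<And>x. h x \<le> k * f x" by (auto simp: le_fun_def)
    define h' where "h' x = inverse k * h x" for x
    have hs: "simple_function M h'" unfolding h'_def using h(1) by auto
    have kk: "inverse k * k = 1" using mult_divide_eq_ennreal[of k 1] False assms
      by (simp add: divide_ennreal_def mult.commute)
    have "h' x \<le> f x" for x
    proof -
      have "h' x \<le> inverse k * (k * f x)" unfolding h'_def using h(2)[of x] by (rule mult_left_mono) simp
      also have "\<dots> = f x" by (simp add: mult.assoc[symmetric] kk)
      finally show ?thesis .
    qed
    then have "integral\<^sup>S M h' \<le> integral\<^sup>N M f"
      unfolding nn_integral_def using hs by (intro SUP_upper) (auto simp: le_fun_def)
    moreover have "h x = k * h' x" for x
      unfolding h'_def by (simp add: mult.assoc[symmetric] kk[unfolded mult.commute[of "inverse k"]])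
    then have "h = (\<lambda>x. k * h' x)" by auto
    then have "integral\<^sup>S M h = k * integral\<^sup>S M h'" using hs by simp
    ultimately show "integral\<^sup>S M h \<le> k * integral\<^sup>N M f" by (simp add: mult_left_mono)
  qed
qed



lemma alg:
  fixes tK a P T p q1 LK Fb \<phi>0 g0 \<phi>x \<phi>xK gx :: real
  assumes tK: "tK > 0" and a: "a > 0" and P: "P = a * tK" and T: "T \<ge> P" and p: "p > 0" and q: "q1 \<ge> p" and LK: "LK \<ge> 0"
    and Fb: "Fb = \<phi>0 + g0 / a * (T / p - P / p)"
    and h1: "\<phi>0 \<le> g0 * tK / p" and h2: "g0 * tK / q1 \<le> \<phi>0" and h3: "\<phi>0 \<le> LK * \<phi>xK"
    and h4: "\<phi>x \<ge> \<phi>xK + gx / a * (T / p - P / p)" and h5: "\<phi>xK \<le> gx * tK / p" and h6: "\<phi>xK \<ge> 0"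
  shows "Fb \<le> q1 / p * LK * \<phi>x"
proof -
  have P0: "P > 0" using tK a P by simp
  have q0: "q1 > 0" using p q by simp
  have e1: "g0 * tK / p = g0 / a * P / p" using a unfolding P by simp
  have s1: "Fb \<le> g0 / a * T / p"
  proof -
    have "g0 / a * P / p + g0 / a * (T / p - P / p) = g0 / a * T / p"
      by (simp add: algebra_simps add_divide_distrib diff_divide_distrib)
    then show ?thesis using Fb h1 e1 by linarith
  qed
  have e2: "g0 / a * T / p = (g0 * tK) / p * (T / P)"
    using a tK unfolding P by simp
  have s2: "g0 * tK \<le> q1 * \<phi>0" using h2 q0 by (simp add: divide_le_eq mult.commute)
  have TP: "T / P \<ge> 0" using T P0 by simp
  have s3: "(g0 * tK) / p * (T / P) \<le> (q1 * (LK * \<phi>xK)) / p * (T / P)"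
  proof -
    have "g0 * tK \<le> q1 * (LK * \<phi>xK)" using s2 h3 q0
      by (meson mult_left_mono order_trans less_imp_le)
    then show ?thesis using p TP by (intro mult_right_mono divide_right_mono) auto
  qed
  have gx: "\<phi>xK * p / P \<le> gx / a"
  proof -
    have "\<phi>xK * p \<le> gx * tK" using h5 p by (simp add: le_divide_eq mult.commute)
    then have "\<phi>xK * p / P \<le> gx * tK / P" using P0 by (intro divide_right_mono) auto
    also have "gx * tK / P = gx / a" using tK unfolding P by simp
    finally show ?thesis .
  qed
  have TPp: "T / p - P / p \<ge> 0" using T p by (simp add: diff_divide_distrib[symmetric])
  have "gx / a * (T / p - P / p) \<ge> \<phi>xK * p / P * (T / p - P / p)"
    using gx TPp by (intro mult_right_mono) auto
  also have "\<phi>xK * p / P * (T / p - P / p) = \<phi>xK * (T / P) - \<phi>xK"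
  proof -
    have "\<phi>xK * p / P * (T / p - P / p) = \<phi>xK / P * (T - P)"
      using p by (simp add: diff_divide_distrib[symmetric])
    also have "\<dots> = \<phi>xK * (T / P) - \<phi>xK" using P0 by (simp add: right_diff_distrib)
    finally show ?thesis .
  qed
  finally have s4: "\<phi>x \<ge> \<phi>xK * (T / P)" using h4 by simp
  have s5: "q1 / p * LK * (\<phi>xK * (T / P)) \<le> q1 / p * LK * \<phi>x"
    using s4 q0 p LK by (intro mult_left_mono) auto
  have e3: "(q1 * (LK * \<phi>xK)) / p * (T / P) = q1 / p * LK * (\<phi>xK * (T / P))" by simp
  show ?thesis using s1 e2 s3 e3 s5 by linarith
qed



lemma orl:
  fixes B :: "'a::euclidean_space set" and \<Phi> :: "'a \<Rightarrow> real \<Rightarrow> real" and Fb :: "real \<Rightarrow> real"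
  assumes Bs: "B \<in> sets lebesgue"
    and Fc: "continuous_on UNIV Fb" and A: "A \<ge> 0" and L: "L \<ge> 0"
    and b1: "\<And>u. 0 \<le> u \<Longrightarrow> u \<le> 1 \<Longrightarrow> Fb u \<le> L * u"
    and b2: "\<And>x u. x \<in> B \<Longrightarrow> 1 \<le> u \<Longrightarrow> Fb u \<le> A * \<Phi> x u"
    and cv: "\<And>x u l. x \<in> B \<Longrightarrow> 0 \<le> u \<Longrightarrow> 1 \<le> l \<Longrightarrow> \<Phi> x (u / l) \<le> \<Phi> x u / l"
    and fm: "f \<in> borel_measurable (lebesgue_on B)" and fi: "integrable (lebesgue_on B) f"
    and c: "c > 0" and fc: "(\<integral>\<^sup>+ x. ennreal (\<Phi> x (\<bar>f x\<bar> / c)) \<partial>(lebesgue_on B)) \<le> 1"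
  shows "\<exists>c'>0. (\<integral>\<^sup>+ x. ennreal (Fb (\<bar>f x\<bar> / c')) \<partial>(lebesgue_on B)) \<le> 1"
proof -
  define M where "M = lebesgue_on B"
  define N where "N = (LINT x|M. \<bar>f x\<bar>)"
  have N0: "N \<ge> 0" unfolding N_def by simp
  define l where "l = 1 + 2 * A + 2 * L * N / c"
  have l1: "l \<ge> 1" unfolding l_def using A L N0 c by simp
  have l2: "2 * A \<le> l" unfolding l_def using A L N0 c by simp
  have l3: "2 * L * N \<le> l * c"
  proof -
    have "l * c \<ge> (2 * L * N / c) * c" unfolding l_def using A L N0 c
      by (intro mult_right_mono) auto
    then show ?thesis using c by simp
  qed
  define c' where "c' = l * c"
  have c'0: "c' > 0" unfolding c'_def using l1 c by simp
  define u where "u x = \<bar>f x\<bar> / c'" for x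
  have Fm: "Fb \<in> borel_measurable borel" using Fc by (rule borel_measurable_continuous_onI)
  have um: "u \<in> borel_measurable M" unfolding u_def M_def using fm by measurable
  have Fum: "(\<lambda>x. Fb (u x)) \<in> borel_measurable M" using measurable_compose[OF um Fm] by (simp add: o_def)
  have Em: "{x \<in> space M. 1 \<le> u x} \<in> sets M" using um by measurable
  define a where "a x = ennreal (if 1 \<le> u x then Fb (u x) else 0)" for x
  define b where "b x = ennreal (if 1 \<le> u x then 0 else Fb (u x))" for x
  have am: "a \<in> borel_measurable M" unfolding a_def using um Fum by measurable
  have bm: "b \<in> borel_measurable M" unfolding b_def using um Fum by measurable
  have split: "ennreal (Fb (u x)) = a x + b x" for x unfolding a_def b_def by auto
  have spM: "space M = B" unfolding M_def using Bs by simp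
  have "(\<integral>\<^sup>+ x. ennreal (Fb (u x)) \<partial>M) = integral\<^sup>N M a + integral\<^sup>N M b"
    unfolding split using am bm by (rule nn_integral_add)
  also have "integral\<^sup>N M a \<le> ennreal (1/2)"
  proof -
    have "integral\<^sup>N M a \<le> (\<integral>\<^sup>+ x. ennreal (A / l) * ennreal (\<Phi> x (\<bar>f x\<bar> / c)) \<partial>M)"
    proof (rule nn_integral_mono)
      fix x assume "x \<in> space M"
      then have x: "x \<in> B" using spM by simp
      show "a x \<le> ennreal (A / l) * ennreal (\<Phi> x (\<bar>f x\<bar> / c))"
      proof (cases "1 \<le> u x")
        case True
        have ux: "u x = (\<bar>f x\<bar> / c) / l" unfolding u_def c'_def by simp
        have "Fb (u x) \<le> A * \<Phi> x ((\<bar>f x\<bar> / c) / l)" using b2[OF x True] by (simp only: ux)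
        also have "A * \<Phi> x ((\<bar>f x\<bar> / c) / l) \<le> A * (\<Phi> x (\<bar>f x\<bar> / c) / l)"
          using cv[OF x _ l1, of "\<bar>f x\<bar> / c"] c A by (intro mult_left_mono) auto
        finally have "Fb (u x) \<le> A / l * \<Phi> x (\<bar>f x\<bar> / c)" by simp
        then have "ennreal (Fb (u x)) \<le> ennreal (A / l * \<Phi> x (\<bar>f x\<bar> / c))"
          by (rule ennreal_leI)
        also have "\<dots> \<le> ennreal (A / l) * ennreal (\<Phi> x (\<bar>f x\<bar> / c))"
        proof (cases "\<Phi> x (\<bar>f x\<bar> / c) \<ge> 0")
          case True
          have "A / l * \<Phi> x (\<bar>f x\<bar> / c) = A * \<Phi> x (\<bar>f x\<bar> / c) / l" by simp
          then show ?thesis using True A l1 by (metis ennreal_mult divide_nonneg_nonneg order_refl order_trans zero_le_one)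
        next
          case False
          then have "A * \<Phi> x (\<bar>f x\<bar> / c) / l \<le> 0" using A l1
            by (intro divide_nonpos_pos mult_nonneg_nonpos) auto
          then have "ennreal (A * \<Phi> x (\<bar>f x\<bar> / c) / l) = 0" by (simp add: ennreal_eq_0_iff)
          then show ?thesis by simp
        qed
        finally show ?thesis unfolding a_def using True by simp
      qed (simp add: a_def)
    qed
    also have "\<dots> \<le> ennreal (A / l) * (\<integral>\<^sup>+ x. ennreal (\<Phi> x (\<bar>f x\<bar> / c)) \<partial>M)"
      by (rule nn_integral_cmult_le) simp
    also have "\<dots> \<le> ennreal (A / l) * 1"
      using fc unfolding M_def by (intro mult_left_mono) auto
    also have "\<dots> \<le> ennreal (1/2)"
    proof -
      have "A / l \<le> 1/2" using l2 l1 by (simp add: divide_le_eq)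
      then show ?thesis by (simp add: ennreal_leI del: ennreal_half)
    qed
    finally show ?thesis .
  qed
  also have "integral\<^sup>N M b \<le> ennreal (1/2)"
  proof -
    have fa: "integrable M (\<lambda>x. L / c' * \<bar>f x\<bar>)" unfolding M_def using fi by auto
    have "integral\<^sup>N M b \<le> (\<integral>\<^sup>+ x. ennreal (L / c' * \<bar>f x\<bar>) \<partial>M)"
    proof (rule nn_integral_mono)
      fix x
      show "b x \<le> ennreal (L / c' * \<bar>f x\<bar>)"
      proof (cases "1 \<le> u x")
        case False
        have "Fb (u x) \<le> L * u x" using b1[of "u x"] False c'0 unfolding u_def by auto
        then show ?thesis unfolding b_def u_def using False by (auto intro!: ennreal_leI)
      qed (simp add: b_def)
    qed
    also have "\<dots> = ennreal (LINT x|M. L / c' * \<bar>f x\<bar>)"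
      using fa L c'0 by (intro nn_integral_eq_integral) auto
    also have "(LINT x|M. L / c' * \<bar>f x\<bar>) = L / c' * N" unfolding N_def by simp
    also have "L / c' * N \<le> 1/2" using l3 c'0 unfolding c'_def by (simp add: field_simps)
    then have "ennreal (L / c' * N) \<le> ennreal (1/2)" by (rule ennreal_leI)
    finally show ?thesis .
  qed
  also have "ennreal (1/2) + ennreal (1/2) = 1"
  proof -
    have "ennreal (1/2) + ennreal (1/2) = ennreal (1/2 + 1/2)" by (rule ennreal_plus[symmetric]) auto
    then show ?thesis by (simp del: ennreal_half)
  qed
  finally show ?thesis using c'0 unfolding u_def M_def by (intro exI[of _ c']) auto
qed



lemma tK_ge1: "0 < (m::real) \<Longrightarrow> m \<le> 1 \<Longrightarrow> e \<le> 0 \<Longrightarrow> 1 \<le> m powr e"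
  by (metis powr_mono2' powr_one_eq_one)

theorem proposition5p1:
  fixes \<Omega> :: "'a::euclidean_space set"
    and x0 :: 'a and r \<gamma> K p q1 L LK :: real
    and \<phi>' \<phi> :: "'a \<Rightarrow> real \<Rightarrow> real"
    and tK :: real and \<phi>bar' \<phi>bar :: "real \<Rightarrow> real"
  assumes dom: "open \<Omega>" "connected \<Omega>" "bounded \<Omega>"
    and ball: "0 < r" "cball x0 r \<subseteq> \<Omega>" "measure lebesgue (ball x0 r) \<le> 1"
    and gam: "0 < \<gamma>" "\<gamma> < 1" and K: "K \<ge> 1"
    and tK_def: "tK = K * measure lebesgue (ball x0 r) powr ((\<gamma> - 1) / real DIM('a))"
    and pq: "1 < p" "p \<le> q1" and L: "L \<ge> 1"
    and nonneg: "\<And>x t. x \<in> \<Omega> \<Longrightarrow> 0 < t \<Longrightarrow> \<phi>' x t \<ge> 0"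
    and A0: "\<And>x. x \<in> \<Omega> \<Longrightarrow> A0 L (\<phi>' x)"
    and Inc: "\<And>x. x \<in> \<Omega> \<Longrightarrow> Inc (p - 1) (\<phi>' x)"
    and Dec: "\<And>x. x \<in> \<Omega> \<Longrightarrow> Dec (q1 - 1) (\<phi>' x)"
    and phi_def: "\<And>x t. x \<in> \<Omega> \<Longrightarrow> 0 \<le> t \<Longrightarrow> \<phi> x t = integral {0..t} (\<phi>' x)"
    and convex: "\<And>x. x \<in> \<Omega> \<Longrightarrow> convex_on {0..} (\<phi> x)"
    and phibar'_def: "\<And>t. \<phi>bar' t = (if t \<le> tK then \<phi>' x0 t
                                      else \<phi>' x0 tK / tK powr (p - 1) * t powr (p - 1))"
    and phibar_def: "\<And>t. \<phi>bar t = integral {0..t} \<phi>bar'"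
    and LK: "LK \<ge> 0"
    and comp: "\<And>t. 1 \<le> t \<Longrightarrow> t \<le> tK \<Longrightarrow>
                 phi_plus \<phi> (ball x0 r) t \<le> LK * phi_minus \<phi> (ball x0 r) t"
  shows "((\<exists>D. continuous_on {0..} D \<and>
            (\<forall>t\<ge>0. (\<phi>bar has_real_derivative D t) (at t within {0..}))) \<and>
          Inc (p - 1) \<phi>bar' \<and> Dec (q1 - 1) \<phi>bar')
       \<and> (\<forall>t. 0 \<le> t \<longrightarrow> t \<le> tK \<longrightarrow> \<phi>bar t = \<phi> x0 t)
       \<and> (\<forall>x\<in>ball x0 r. \<forall>t\<ge>0. \<phi>bar t \<le> q1 / p * LK * \<phi> x t + L)
       \<and> sobolev_orlicz \<phi> (ball x0 r) \<subseteq> sobolev_orlicz (\<lambda>x. \<phi>bar) (ball x0 r)"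
proof -
  have x0: "x0 \<in> \<Omega>" using ball by auto
  have gp: "gprops (\<phi>' x) L p q1" if "x \<in> \<Omega>" for x
    using L pq nonneg[OF that] A0[OF that] Inc[OF that] Dec[OF that] by unfold_locales auto
  have phiG: "\<phi> x t = integral {0..t} (Gz (\<phi>' x))" if "x \<in> \<Omega>" "0 \<le> t" for x t
  proof -
    have "\<phi> x t = integral {0..t} (\<phi>' x)" using phi_def that by simp
    also have "\<dots> = integral {0..t} (Gz (\<phi>' x))"
      by (rule integral_spike[of "{0}"]) (auto simp: Gz_def)
    finally show ?thesis .
  qed
  define \<mu> where "\<mu> = measure lebesgue (ball x0 r)"
  have mu0: "\<mu> > 0" unfolding \<mu>_def using content_ball_pos[OF ball(1), of x0] by simp
  have "1 \<le> \<mu> powr ((\<gamma> - 1) / real DIM('a))"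
    using mu0 ball(3) gam unfolding \<mu>_def by (intro tK_ge1) (auto simp: divide_nonpos_pos)
  then have tK1: "tK \<ge> 1" using K unfolding tK_def \<mu>_def
    by (metis mult_mono' mult_1 order_trans zero_le_one)
  have tK0: "tK > 0" using tK1 by simp
  define g0 where "g0 = \<phi>' x0"
  interpret G0: gprops g0 L p q1 using gp[OF x0] unfolding g0_def .
  define c where "c = g0 tK / tK powr (p-1)"
  have c0: "c \<ge> 0" unfolding c_def using G0.nn[OF tK0] by simp
  have ctK: "c * tK powr (p-1) = g0 tK" unfolding c_def using tK0 by simp
  define h where "h s = (if s \<le> tK then Gz g0 s else c * s powr (p-1))" for s
  have hcont: "continuous_on UNIV h"
  proof -
    have 1: "continuous_on {..tK} h"
      by (rule continuous_on_eq[OF continuous_on_subset[OF G0.Gz_cont]]) (auto simp: h_def)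
    have "continuous_on {tK..} (\<lambda>s. c * s powr (p-1))"
      using tK0 by (intro continuous_intros) auto
    then have 2: "continuous_on {tK..} h"
      by (rule continuous_on_eq) (use tK0 in \<open>auto simp: h_def Gz_def ctK\<close>)
    have "continuous_on ({..tK} \<union> {tK..}) h"
      by (rule continuous_on_closed_Un[OF _ _ 1 2]) auto
    moreover have "{..tK} \<union> {tK..} = (UNIV::real set)" by auto
    ultimately show ?thesis by simp
  qed
  have phibar'_h: "\<phi>bar' s = h s" if "s > 0" for s
    using that unfolding phibar'_def h_def Gz_def g0_def c_def by simp
  have hint: "h integrable_on {a..b}" for a b
    by (rule integrable_continuous_real[OF continuous_on_subset[OF hcont]]) auto
  have h_neg: "h s = 0" if "s \<le> 0" for s
    using that tK0 unfolding h_def Gz_def by simp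
  have Fb: "\<phi>bar u = integral {a..u} h" if a: "a \<le> 0" for a u
  proof -
    have "\<phi>bar u = integral {0..u} h" unfolding phibar_def
    proof (rule integral_spike[of "{0}"])
      fix x assume "x \<in> {0..u} - {0}"
      then have "x > 0" by auto
      then show "h x = \<phi>bar' x" by (simp add: phibar'_h)
    qed auto
    also have "integral {0..u} h = integral {a..u} h"
    proof (cases "u \<ge> 0")
      case True
      have "integral {a..0} h + integral {0..u} h = integral {a..u} h"
        by (rule Henstock_Kurzweil_Integration.integral_combine) (use True a hint in auto)
      moreover have "integral {a..0} h = integral {a..0} (\<lambda>_. 0::real)"
        by (rule integral_cong) (simp add: h_neg)
      ultimately show ?thesis by simp
    next
      case False
      have "integral {a..u} h = integral {a..u} (\<lambda>_. 0::real)"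
        by (rule integral_cong) (use False in \<open>simp add: h_neg\<close>)
      moreover have "{0..u} = ({}::real set)" using False by auto
      ultimately show ?thesis by simp
    qed
    finally show ?thesis .
  qed
  have Fderiv: "(\<phi>bar has_real_derivative h t) (at t)" for t
  proof -
    define a where "a = - (\<bar>t\<bar> + 1)"
    define b where "b = \<bar>t\<bar> + 1"
    have "((\<lambda>u. integral {a..u} h) has_real_derivative h t) (at t within {a..b})"
      by (rule integral_has_real_derivative[OF continuous_on_subset[OF hcont]])
         (auto simp: a_def b_def)
    moreover have "at t within {a..b} = at t"
      by (rule at_within_interior) (auto simp: a_def b_def)
    moreover have "\<phi>bar = (\<lambda>u. integral {a..u} h)" using Fb[of a] by (auto simp: a_def)
    ultimately show ?thesis by simp
  qed
  have phibar_cont: "continuous_on UNIV \<phi>bar"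
    using Fderiv by (intro continuous_at_imp_continuous_on) (auto intro: DERIV_isCont)
  have P1a: "\<exists>D. continuous_on {0..} D \<and> (\<forall>t\<ge>0. (\<phi>bar has_real_derivative D t) (at t within {0..}))"
    using continuous_on_subset[OF hcont] Fderiv
    by (intro exI[of _ h]) (auto intro: has_field_derivative_at_within)
  have powq: "t powr (p-1) / t powr (q1-1) \<le> s powr (p-1) / s powr (q1-1)" if "0 < s" "s \<le> t" for s t
  proof -
    have "t powr (p-1) / t powr (q1-1) = t powr (p - q1)" using that by (simp add: powr_diff[symmetric])
    also have "\<dots> \<le> s powr (p - q1)" using that pq by (intro powr_mono2') auto
    also have "\<dots> = s powr (p-1) / s powr (q1-1)" using that by (simp add: powr_diff[symmetric])
    finally show ?thesis .
  qed
  have P1b: "Inc (p - 1) \<phi>bar'"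
    unfolding Inc_def
  proof (intro allI impI)
    fix s t :: real assume st: "0 < s" "s \<le> t"
    show "\<phi>bar' s / s powr (p-1) \<le> \<phi>bar' t / t powr (p-1)"
    proof (cases "t \<le> tK")
      case True
      then show ?thesis using G0.inc st unfolding Inc_def phibar'_def g0_def by auto
    next
      case False
      then have tp: "\<phi>bar' t / t powr (p-1) = c" unfolding phibar'_def c_def g0_def using st by simp
      show ?thesis
      proof (cases "s \<le> tK")
        case True
        then have "\<phi>bar' s / s powr (p-1) \<le> g0 tK / tK powr (p-1)"
          using G0.inc st unfolding Inc_def phibar'_def g0_def by auto
        then show ?thesis using tp c_def by simp
      next
        case False
        then show ?thesis using tp st unfolding phibar'_def c_def g0_def by simp
      qed
    qed
  qed
  have P1c: "Dec (q1 - 1) \<phi>bar'"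
    unfolding Dec_def
  proof (intro allI impI)
    fix s t :: real assume st: "0 < s" "s \<le> t"
    show "\<phi>bar' t / t powr (q1-1) \<le> \<phi>bar' s / s powr (q1-1)"
    proof (cases "t \<le> tK")
      case True
      then show ?thesis using G0.dec st unfolding Dec_def phibar'_def g0_def by auto
    next
      case False
      then have tp: "\<phi>bar' t / t powr (q1-1) = c * (t powr (p-1) / t powr (q1-1))"
        unfolding phibar'_def c_def g0_def using st by simp
      show ?thesis
      proof (cases "s \<le> tK")
        case True
        have "c * (t powr (p-1) / t powr (q1-1)) \<le> c * (tK powr (p-1) / tK powr (q1-1))"
          using powq[of tK t] False c0 tK0 by (intro mult_left_mono) auto
        also have "\<dots> = g0 tK / tK powr (q1-1)" unfolding c_def using tK0 by simp
        also have "\<dots> \<le> \<phi>bar' s / s powr (q1-1)"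
          using G0.dec st True unfolding Dec_def phibar'_def g0_def by auto
        finally show ?thesis unfolding tp .
      next
        case False
        have sp: "\<phi>bar' s / s powr (q1-1) = c * (s powr (p-1) / s powr (q1-1))"
          unfolding phibar'_def c_def g0_def using st False by simp
        have "c * (t powr (p-1) / t powr (q1-1)) \<le> c * (s powr (p-1) / s powr (q1-1))"
          using powq[of s t] st c0 by (intro mult_left_mono) auto
        then show ?thesis unfolding tp sp .
      qed
    qed
  qed
  have P2: "\<phi>bar t = \<phi> x0 t" if "0 \<le> t" "t \<le> tK" for t
  proof -
    have "\<phi>bar t = integral {0..t} g0" unfolding phibar_def
      by (rule integral_cong) (use that in \<open>auto simp: phibar'_def g0_def\<close>)
    then show ?thesis using phi_def[OF x0 that(1)] unfolding g0_def by simp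
  qed
  define A where "A = q1 / p * LK"
  have A0': "A \<ge> 0" unfolding A_def using LK pq by simp
  have phinn: "0 \<le> \<phi> x t" if "x \<in> \<Omega>" "0 \<le> t" for x t
    using phiG[OF that] gprops.I5[OF gp[OF that(1)]] by simp
  have P3b: "\<phi>bar t \<le> L * t" if "0 \<le> t" "t \<le> 1" for t
    using P2[of t] that tK1 phiG[OF x0 that(1)] G0.I4[OF that] unfolding g0_def by simp
  have cmpx: "\<phi> x0 s \<le> LK * \<phi> x s" if x: "x \<in> ball x0 r" and s: "1 \<le> s" "s \<le> tK" for x s
  proof -
    have xo: "\<And>y. y \<in> ball x0 r \<Longrightarrow> y \<in> \<Omega>" using ball by auto
    have bdd: "bdd_above ((\<lambda>y. \<phi> y s) ` ball x0 r)"
    proof (rule bdd_aboveI2)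
      fix y assume "y \<in> ball x0 r"
      then show "\<phi> y s \<le> L * s powr (q1-1) * s"
        using phiG[OF xo, of y s] gprops.I6[OF gp[OF xo], of y s] s by simp
    qed
    have bddb: "bdd_below ((\<lambda>y. \<phi> y s) ` ball x0 r)"
      by (rule bdd_belowI2[of _ 0]) (use phinn xo s in auto)
    have "\<phi> x0 s \<le> phi_plus \<phi> (ball x0 r) s"
      unfolding phi_plus_def by (rule cSUP_upper[OF _ bdd]) (use ball in simp)
    also have "\<dots> \<le> LK * phi_minus \<phi> (ball x0 r) s" using comp s by simp
    also have "\<dots> \<le> LK * \<phi> x s"
      unfolding phi_minus_def by (intro mult_left_mono cINF_lower[OF bddb x] LK)
    finally show ?thesis .
  qed
  have P3a: "\<phi>bar t \<le> A * \<phi> x t" if x: "x \<in> ball x0 r" and t: "1 \<le> t" for x t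
  proof -
    have xO: "x \<in> \<Omega>" using x ball by auto
    interpret GX: gprops "\<phi>' x" L p q1 using gp[OF xO] .
    show ?thesis
    proof (cases "t \<le> tK")
      case True
      have "\<phi>bar t = \<phi> x0 t" using P2 t True by simp
      also have "\<dots> \<le> LK * \<phi> x t" using cmpx[OF x t True] .
      also have "\<dots> \<le> A * \<phi> x t"
      proof -
        have qp: "1 \<le> q1 / p" using pq by simp
        have "1 * LK \<le> q1 / p * LK" using mult_right_mono[OF qp LK] .
        then have "LK \<le> A" unfolding A_def by simp
        then show ?thesis using phinn[OF xO, of t] t by (intro mult_right_mono) auto
      qed
      finally show ?thesis .
    next
      case False
      have pp: "tK powr (p-1) * tK = tK powr p" using tK0 by (simp add: powr_diff)
      have a0: "tK powr (p-1) > 0" using tK0 by simp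
      have TP: "tK powr p \<le> t powr p" using False pq tK0 by (intro powr_mono2) auto
      have Fbt: "\<phi>bar t = \<phi> x0 tK + g0 tK / tK powr (p-1) * (t powr p / p - tK powr p / p)"
      proof -
        have "\<phi>bar t = integral {-1..t} h" using Fb by simp
        also have "\<dots> = integral {-1..tK} h + integral {tK..t} h"
          using False tK0 hint by (intro Henstock_Kurzweil_Integration.integral_combine[symmetric]) auto
        also have "integral {-1..tK} h = \<phi> x0 tK" using Fb[of "-1" tK] P2[of tK] tK0 by simp
        also have "integral {tK..t} h = integral {tK..t} (\<lambda>s. c * s powr (p-1))"
          by (rule integral_cong) (use tK0 in \<open>auto simp: h_def Gz_def ctK\<close>)
        also have "\<dots> = c * (t powr p / p - tK powr p / p)"
          using False tK0 pq by (intro integral_unique has_integral_mult_right powr_int_ab) auto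
        finally show ?thesis unfolding c_def .
      qed
      have h4: "\<phi> x t \<ge> \<phi> x tK + \<phi>' x tK / tK powr (p-1) * (t powr p / p - tK powr p / p)"
      proof -
        have "integral {0..tK} (Gz (\<phi>' x)) + integral {tK..t} (Gz (\<phi>' x)) = integral {0..t} (Gz (\<phi>' x))"
          by (rule Henstock_Kurzweil_Integration.integral_combine) (use False tK0 GX.Gz_int in auto)
        then have "\<phi> x t = integral {0..tK} (Gz (\<phi>' x)) + integral {tK..t} (Gz (\<phi>' x))"
          using phiG[OF xO, of t] False tK0 by simp
        then show ?thesis using phiG[OF xO, of tK] tK0 GX.I3[OF tK0, of t] False by simp
      qed
      show ?thesis unfolding A_def
      proof (rule alg[OF tK0 a0 pp[symmetric] TP _ _ _ Fbt _ _ _ h4])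
        show "0 < p" "p \<le> q1" "0 \<le> LK" using pq LK by auto
        show "\<phi> x0 tK \<le> g0 tK * tK / p" using phiG[OF x0, of tK] G0.I1[OF tK0] tK0 unfolding g0_def by simp
        show "g0 tK * tK / q1 \<le> \<phi> x0 tK" using phiG[OF x0, of tK] G0.I2[OF tK0] tK0 unfolding g0_def by simp
        show "\<phi> x0 tK \<le> LK * \<phi> x tK" using cmpx[OF x tK1 order_refl] .
        show "\<phi> x tK \<le> \<phi>' x tK * tK / p" using phiG[OF xO, of tK] GX.I1[OF tK0] tK0 by simp
        show "0 \<le> \<phi> x tK" using phinn[OF xO, of tK] tK0 by simp
      qed
    qed
  qed
  have P3: "\<forall>x\<in>ball x0 r. \<forall>t\<ge>0. \<phi>bar t \<le> q1 / p * LK * \<phi> x t + L"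
  proof (intro ballI allI impI)
    fix x t assume x: "x \<in> ball x0 r" and t: "0 \<le> (t::real)"
    have xO: "x \<in> \<Omega>" using x ball by auto
    show "\<phi>bar t \<le> q1 / p * LK * \<phi> x t + L"
    proof (cases "t \<le> 1")
      case True
      have "\<phi>bar t \<le> L * t" using P3b t True by simp
      also have "\<dots> \<le> L" using True L by (simp add: mult_left_le)
      moreover have "0 \<le> q1 / p * LK * \<phi> x t" using A0' phinn[OF xO t] unfolding A_def by (rule mult_nonneg_nonneg)
      ultimately show ?thesis by linarith
    next
      case False
      then have "\<phi>bar t \<le> A * \<phi> x t" using P3a[OF x] by simp
      then show ?thesis using L unfolding A_def by simp
    qed
  qed
  have Bs: "ball x0 r \<in> sets lebesgue" by auto
  have key: "w \<in> orlicz (\<lambda>x. \<phi>bar) (ball x0 r)"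
    if w: "w \<in> orlicz \<phi> (ball x0 r)" and wi: "integrable (lebesgue_on (ball x0 r)) w" for w
  proof -
    from w obtain c where wm: "w \<in> borel_measurable (lebesgue_on (ball x0 r))" and c: "c > 0"
      and wc: "(\<integral>\<^sup>+ x. ennreal (\<phi> x (\<bar>w x\<bar> / c)) \<partial>(lebesgue_on (ball x0 r))) \<le> 1"
      unfolding orlicz_def by auto
    have "\<exists>c'>0. (\<integral>\<^sup>+ x. ennreal (\<phi>bar (\<bar>w x\<bar> / c')) \<partial>(lebesgue_on (ball x0 r))) \<le> 1"
    proof (rule orl[OF Bs phibar_cont A0' _ P3b P3a _ wm wi c wc])
      show "0 \<le> L" using L by simp
      fix x u l assume x: "x \<in> ball x0 r" and u: "0 \<le> (u::real)" and l: "1 \<le> (l::real)"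
      have xO: "x \<in> \<Omega>" using x ball by auto
      have z: "\<phi> x 0 = 0" using phi_def[OF xO, of 0] by simp
      have "\<phi> x ((1 - 1/l) *\<^sub>R 0 + (1/l) *\<^sub>R u) \<le> (1 - 1/l) * \<phi> x 0 + (1/l) * \<phi> x u"
        by (rule convex_onD[OF convex[OF xO]]) (use l u in auto)
      then show "\<phi> x (u / l) \<le> \<phi> x u / l" using z by simp
    qed auto
    then show ?thesis using wm unfolding orlicz_def by auto
  qed
  have P4: "sobolev_orlicz \<phi> (ball x0 r) \<subseteq> sobolev_orlicz (\<lambda>x. \<phi>bar) (ball x0 r)"
  proof
    fix f assume "f \<in> sobolev_orlicz \<phi> (ball x0 r)"
    then obtain G where wg: "weak_gradient f G (ball x0 r)" and fo: "f \<in> orlicz \<phi> (ball x0 r)"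
      and go: "(\<lambda>x. norm (G x)) \<in> orlicz \<phi> (ball x0 r)"
      unfolding sobolev_orlicz_def by auto
    have fi: "integrable (lebesgue_on (ball x0 r)) f" and gi: "integrable (lebesgue_on (ball x0 r)) G"
      using wg unfolding weak_gradient_def by auto
    have "f \<in> orlicz (\<lambda>x. \<phi>bar) (ball x0 r)" using key[OF fo fi] .
    moreover have "(\<lambda>x. norm (G x)) \<in> orlicz (\<lambda>x. \<phi>bar) (ball x0 r)"
      using key[OF go integrable_norm[OF gi]] .
    ultimately show "f \<in> sobolev_orlicz (\<lambda>x. \<phi>bar) (ball x0 r)"
      using wg unfolding sobolev_orlicz_def by auto
  qed
  show ?thesis using P1a P1b P1c P2 P3 P4 by blast
qed


end
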